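(* Let $X$ be a perfectly normal sequential space which contains a closed subspace homeomorphic to $K$ and a (not necessarily closed) subspace $V'\subset X$ homeomorphic to $V$; let $y_0'$ denote the unique non-isolated point of $V'$. Then: (a) $X$ is not homeomorphic to any closed convex subset of a (real) linear topological space; (b) $X$ is not homeomorphic to any closed multiplicative subset of a topological group; (c) there is no topological group $G$ with a multiplicative subset $M\subset G$ (with the subspace topology) and a homeomorphism $X\to M$ that sends $y_0'$ to an idempotent (i.e. to the identity element) of $G$.
   Context: $K=\{(0,0)\}\cup\{(\tfrac1n,\tfrac1{nm}) : n,m\in\mathbb N\}\subset\mathbb R^2$ with the subspace topology. Let $S_0=\{0\}\cup\{\tfrac1n:n\in\mathbb N\}\subset\mathbb R$ and let $V$ (the Fréchet–Urysohn fan) be the quotient space $(\mathbb N\times S_0)/(\mathbb N\times\{0\})$, where $\mathbb N$ is discrete, i.e. $\mathbb N\times S_0$ with the subset $\mathbb N\times\{0\}$ collapsed to a single point; $V$ has exactly one non-isolated point. A subset $A$ of a topological group $G$ is multiplicative if $a\ast b\in A$ for all $a,b\in A$, where $\ast$ is the group operation. A space is sequential if every sequentially closed set is closed. *)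

theory Defs
  imports "HOL-Analysis.Analysis"
begin

definition K_set :: "(real \<times> real) set" where
  "K_set = insert (0,0) {(1 / real n, 1 / real (n * m)) | n m. n \<ge> 1 \<and> m \<ge> 1}"

definition S0_set :: "real set" where
  "S0_set = insert 0 {1 / real n | n. n \<ge> 1}"

definition NS0_top :: "(nat \<times> real) topology" where
  "NS0_top = prod_topology (discrete_topology {n. n \<ge> 1}) (top_of_set S0_set)"

text \<open>Quotient map collapsing \<nat> \<times> {0} to a single point (None).\<close>
definition fan_quot :: "nat \<times> real \<Rightarrow> (nat \<times> real) option" where
  "fan_quot p = (if snd p = 0 then None else Some p)"

definition fan_V :: "(nat \<times> real) option topology" where
  "fan_V = topology (\<lambda>U. U \<subseteq> fan_quot ` topspace NS0_top \<and>
                          openin NS0_top {x \<in> topspace NS0_top. fan_quot x \<in> U})"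

definition seq_closed_in :: "'a topology \<Rightarrow> 'a set \<Rightarrow> bool" where
  "seq_closed_in X A \<longleftrightarrow> A \<subseteq> topspace X \<and>
     (\<forall>f l. (\<forall>n. f n \<in> A) \<and> limitin X f l sequentially \<longrightarrow> l \<in> A)"

definition sequential_space :: "'a topology \<Rightarrow> bool" where
  "sequential_space X \<longleftrightarrow> (\<forall>A. seq_closed_in X A \<longrightarrow> closedin X A)"

text \<open>Perfectly normal (Engelking's convention: T1, normal, every closed set a G_delta).\<close>
definition perfectly_normal_space :: "'a topology \<Rightarrow> bool" where
  "perfectly_normal_space X \<longleftrightarrow> t1_space X \<and> normal_space X \<and>
     (\<forall>C. closedin X C \<longrightarrow> gdelta_in X C)"

definition linear_topological_space :: "'v::real_vector topology \<Rightarrow> bool" where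
  "linear_topological_space T \<longleftrightarrow> topspace T = UNIV \<and>
     continuous_map (prod_topology T T) T (\<lambda>(x, y). x + y) \<and>
     continuous_map (prod_topology euclideanreal T) T (\<lambda>(a, x). a *\<^sub>R x)"

definition topological_group ::
  "'g topology \<Rightarrow> ('g \<Rightarrow> 'g \<Rightarrow> 'g) \<Rightarrow> 'g \<Rightarrow> ('g \<Rightarrow> 'g) \<Rightarrow> bool" where
  "topological_group G mul e iv \<longleftrightarrow>
     (\<forall>x\<in>topspace G. \<forall>y\<in>topspace G. mul x y \<in> topspace G) \<and>
     (\<forall>x\<in>topspace G. \<forall>y\<in>topspace G. \<forall>z\<in>topspace G. mul (mul x y) z = mul x (mul y z)) \<and>
     e \<in> topspace G \<and>
     (\<forall>x\<in>topspace G. mul e x = x \<and> mul x e = x) \<and>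
     (\<forall>x\<in>topspace G. iv x \<in> topspace G \<and> mul (iv x) x = e \<and> mul x (iv x) = e) \<and>
     continuous_map (prod_topology G G) G (\<lambda>(x, y). mul x y) \<and>
     continuous_map G G iv"

definition multiplicative_subset :: "('g \<Rightarrow> 'g \<Rightarrow> 'g) \<Rightarrow> 'g set \<Rightarrow> bool" where
  "multiplicative_subset mul A \<longleftrightarrow> (\<forall>a\<in>A. \<forall>b\<in>A. mul a b \<in> A)"

end

theory Submission
  imports Defs
begin


lemma fan_istop: "istopology (\<lambda>U. U \<subseteq> fan_quot ` topspace NS0_top \<and>
                          openin NS0_top {x \<in> topspace NS0_top. fan_quot x \<in> U})"
proof -
  define P where "P = (\<lambda>U. {x \<in> topspace NS0_top. fan_quot x \<in> U})"
  have 1: "openin NS0_top (P (S \<inter> T))" if "openin NS0_top (P S)" "openin NS0_top (P T)" for S T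
  proof -
    have "P (S \<inter> T) = P S \<inter> P T" by (auto simp: P_def)
    then show ?thesis using that by auto
  qed
  have 2: "openin NS0_top (P (\<Union>KK))" if "\<forall>K\<in>KK. openin NS0_top (P K)" for KK
  proof -
    have "P (\<Union>KK) = \<Union>(P ` KK)" by (auto simp: P_def)
    then show ?thesis using that by auto
  qed
  show ?thesis unfolding istopology_def
    using 1 2 unfolding P_def by blast
qed

lemma openin_fan_V: "openin fan_V U \<longleftrightarrow> U \<subseteq> fan_quot ` topspace NS0_top \<and>
                          openin NS0_top {x \<in> topspace NS0_top. fan_quot x \<in> U}"
  unfolding fan_V_def using fan_istop by simp

lemma topspace_NS0: "topspace NS0_top = {n. n \<ge> 1} \<times> S0_set"
  by (simp add: NS0_top_def)

lemma topspace_fan_V: "topspace fan_V = fan_quot ` topspace NS0_top"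
proof -
  have "openin fan_V (fan_quot ` topspace NS0_top)"
  proof -
    have "{x \<in> topspace NS0_top. fan_quot x \<in> fan_quot ` topspace NS0_top} = topspace NS0_top" by auto
    then show ?thesis unfolding openin_fan_V by simp
  qed
  then show ?thesis
    by (metis openin_fan_V openin_subset openin_topspace subset_antisym)
qed

lemma S0_pt: "1 / real (Suc m) \<in> S0_set"
  unfolding S0_set_def by (auto intro!: exI[of _ "Suc m"])

lemma S0_0: "0 \<in> S0_set" unfolding S0_set_def by auto

lemma S0_nonneg: "t \<in> S0_set \<Longrightarrow> t \<ge> 0"
  unfolding S0_set_def by auto

lemma fan_pt: "Some (Suc n, 1 / real (Suc m)) \<in> topspace fan_V"
proof -
  have "(Suc n, 1 / real (Suc m)) \<in> topspace NS0_top" using S0_pt by (simp add: topspace_NS0)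
  moreover have "fan_quot (Suc n, 1 / real (Suc m)) = Some (Suc n, 1 / real (Suc m))"
    by (simp add: fan_quot_def)
  ultimately show ?thesis unfolding topspace_fan_V by (metis image_eqI)
qed

lemma fan_vertex: "None \<in> topspace fan_V"
proof -
  have "(1, 0) \<in> topspace NS0_top" using S0_0 by (simp add: topspace_NS0)
  moreover have "fan_quot (1, 0) = None" by (simp add: fan_quot_def)
  ultimately show ?thesis unfolding topspace_fan_V by (metis image_eqI)
qed

lemma fan_V1: "limitin fan_V (\<lambda>m. Some (Suc n, 1 / real (Suc m))) None sequentially"
  unfolding limitin_def
proof (intro conjI allI impI fan_vertex)
  fix U assume U: "openin fan_V U \<and> None \<in> U"
  define P where "P = {x \<in> topspace NS0_top. fan_quot x \<in> U}"
  have P: "openin NS0_top P" using U openin_fan_V[of U] unfolding P_def by blast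
  have "(Suc n, 0) \<in> P" using U S0_0 by (auto simp: P_def topspace_NS0 fan_quot_def)
  then obtain A B where AB: "openin (discrete_topology {n. n \<ge> 1}) A" "openin (top_of_set S0_set) B"
    "Suc n \<in> A" "0 \<in> B" "A \<times> B \<subseteq> P"
  proof -
    have "\<forall>x y. (x,y) \<in> P \<longrightarrow> (\<exists>A B. openin (discrete_topology {n. n \<ge> 1}) A \<and> openin (top_of_set S0_set) B \<and> x \<in> A \<and> y \<in> B \<and> A \<times> B \<subseteq> P)"
      using P unfolding NS0_top_def openin_prod_topology_alt .
    then show ?thesis using that \<open>(Suc n, 0) \<in> P\<close> by meson
  qed
  obtain Ob where O: "open Ob" "B = S0_set \<inter> Ob" using AB(2) by (auto simp: openin_open)
  obtain e where e: "e > 0" "ball 0 e \<subseteq> Ob" using O AB(4) by (meson IntD2 open_contains_ball)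
  obtain N where N: "1 / real (Suc N) < e" using e(1)
    by (metis reals_Archimedean inverse_eq_divide)
  have "Some (Suc n, 1 / real (Suc m)) \<in> U" if "m \<ge> N" for m
  proof -
    have "1 / real (Suc m) \<le> 1 / real (Suc N)" using that by (simp add: frac_le)
    then have "1 / real (Suc m) \<in> ball 0 e" using N by simp
    then have "1 / real (Suc m) \<in> B" using O e S0_pt by auto
    then have "(Suc n, 1 / real (Suc m)) \<in> P" using AB by auto
    then show ?thesis by (simp add: P_def fan_quot_def)
  qed
  then show "\<forall>\<^sub>F m in sequentially. Some (Suc n, 1 / real (Suc m)) \<in> U"
    unfolding eventually_sequentially by blast
qed

lemma fan_V2:
  assumes nn: "filterlim nn at_top sequentially"
  shows "\<not> limitin fan_V (\<lambda>j. Some (Suc (nn j), 1 / real (Suc (mm j)))) None sequentially"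
proof
  assume L: "limitin fan_V (\<lambda>j. Some (Suc (nn j), 1 / real (Suc (mm j)))) None sequentially"
  define J where "J a = {j. Suc (nn j) = a}" for a
  have finJ: "finite (J a)" for a
  proof -
    have "eventually (\<lambda>j. nn j \<ge> a) sequentially" using nn by (simp add: filterlim_at_top)
    then obtain N where N: "\<And>j. j \<ge> N \<Longrightarrow> nn j \<ge> a" by (auto simp: eventually_sequentially)
    have "J a \<subseteq> {..<N}"
    proof
      fix j assume "j \<in> J a"
      then have "Suc (nn j) = a" by (simp add: J_def)
      then show "j \<in> {..<N}" using N[of j] by (cases "N \<le> j") auto
    qed
    then show ?thesis by (meson finite_lessThan finite_subset)
  qed
  define c where "c a = Min (insert 1 ((\<lambda>j. 1 / real (Suc (mm j))) ` J a))" for a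
  have cpos: "c a > 0" for a
    unfolding c_def using finJ by (subst Min_gr_iff) auto
  have cle: "c (Suc (nn j)) \<le> 1 / real (Suc (mm j))" for j
  proof -
    have "j \<in> J (Suc (nn j))" by (simp add: J_def)
    then show ?thesis unfolding c_def using finJ[of "Suc (nn j)"] by (intro Min_le) auto
  qed
  define P where "P = {x \<in> topspace NS0_top. snd x < c (fst x)}"
  define U where "U = fan_quot ` P"
  have PU: "{x \<in> topspace NS0_top. fan_quot x \<in> U} = P"
  proof (intro set_eqI iffI)
    fix x assume x: "x \<in> {x \<in> topspace NS0_top. fan_quot x \<in> U}"
    then obtain y where y: "y \<in> P" "fan_quot x = fan_quot y" by (auto simp: U_def)
    show "x \<in> P"
    proof (cases "snd x = 0")
      case True then show ?thesis using x cpos by (auto simp: P_def)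
    next
      case False
      then have "fan_quot y = Some x" using y by (simp add: fan_quot_def)
      then have "y = x" by (auto simp: fan_quot_def split: if_splits)
      then show ?thesis using y by simp
    qed
  next
    fix x assume "x \<in> P" then show "x \<in> {x \<in> topspace NS0_top. fan_quot x \<in> U}"
      by (auto simp: U_def P_def)
  qed
  have "openin NS0_top P"
    unfolding NS0_top_def openin_prod_topology_alt
  proof (intro allI impI)
    fix a t assume at: "(a, t) \<in> P"
    show "\<exists>A B. openin (discrete_topology {n. n \<ge> 1}) A \<and> openin (top_of_set S0_set) B \<and> a \<in> A \<and> t \<in> B \<and> A \<times> B \<subseteq> P"
    proof (intro exI conjI)
      show "openin (discrete_topology {n. n \<ge> 1}) {a}" using at by (auto simp: P_def topspace_NS0)
      show "openin (top_of_set S0_set) (S0_set \<inter> {..<c a})"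
        by (simp add: openin_open_Int)
      show "{a} \<times> (S0_set \<inter> {..<c a}) \<subseteq> P" using at by (auto simp: P_def topspace_NS0)
    qed (use at in \<open>auto simp: P_def topspace_NS0\<close>)
  qed
  then have Uo: "openin fan_V U"
    unfolding openin_fan_V PU by (auto simp: U_def P_def)
  have "None \<in> U"
  proof -
    have "(1, 0) \<in> P" using S0_0 cpos by (auto simp: P_def topspace_NS0)
    then show ?thesis unfolding U_def by (metis fan_quot_def image_eqI snd_conv)
  qed
  then have "eventually (\<lambda>j. Some (Suc (nn j), 1 / real (Suc (mm j))) \<in> U) sequentially"
    using L Uo by (simp add: limitin_def)
  then obtain j where "Some (Suc (nn j), 1 / real (Suc (mm j))) \<in> U"
    by (meson eventually_sequentially order_refl)
  then have "(Suc (nn j), 1 / real (Suc (mm j))) \<in> P"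
    using PU fan_pt[of "nn j" "mm j"] S0_pt[of "mm j", simplified] by (auto simp: fan_quot_def topspace_NS0)
  then show False using cle[of j] by (simp add: P_def)
qed


definition kpt :: "nat \<Rightarrow> nat \<Rightarrow> real \<times> real" where
  "kpt n m = (1 / real (Suc n), 1 / real (Suc n * Suc m))"

lemma kpt_in: "kpt n m \<in> K_set"
  unfolding K_set_def kpt_def
  by (rule insertI2, rule CollectI, rule exI[of _ "Suc n"], rule exI[of _ "Suc m"]) simp

lemma K00: "(0,0) \<in> K_set" unfolding K_set_def by auto

lemma K1e:
  assumes "openin (top_of_set K_set) U" "(0,0) \<in> U"
  shows "\<exists>N. \<forall>n\<ge>N. \<forall>m. kpt n m \<in> U"
proof -
  obtain T where T: "open T" "U = K_set \<inter> T" using assms(1) by (auto simp: openin_open)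
  obtain e where e: "e > 0" "ball (0,0) e \<subseteq> T" using T assms(2) by (meson IntD2 open_contains_ball)
  obtain N where N: "inverse (real (Suc N)) < e / 2" using e(1)
    by (metis reals_Archimedean half_gt_zero)
  have "kpt n m \<in> U" if "n \<ge> N" for n m
  proof -
    have a: "1 / real (Suc n) \<le> 1 / real (Suc N)" using that by (simp add: frac_le)
    have b: "1 / real (Suc n * Suc m) \<le> 1 / real (Suc n)"
    proof -
      have p: "0 < real (Suc n * Suc m)" by (simp only: of_nat_0_less_iff) simp
      have "real (Suc n) \<le> real (Suc n * Suc m)" by (simp only: of_nat_le_iff) simp
      then show ?thesis using p by (intro divide_left_mono) auto
    qed
    have "norm (kpt n m) \<le> norm (1 / real (Suc n)) + norm (1 / real (Suc n * Suc m))"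
      unfolding kpt_def by (rule norm_Pair_le)
    also have "\<dots> \<le> 2 / real (Suc N)" using a b by simp
    also have "\<dots> < e" using N by (simp add: field_simps)
    finally have "kpt n m \<in> ball (0,0) e" by (simp add: dist_norm zero_prod_def[symmetric])
    then show ?thesis using e T kpt_in by auto
  qed
  then show ?thesis by blast
qed

lemma K2e:
  assumes F: "F \<noteq> bot" and mm: "filterlim mm at_top F"
  shows "\<not> limitin (top_of_set K_set) (\<lambda>j. kpt n (mm j)) z F"
proof
  assume L: "limitin (top_of_set K_set) (\<lambda>j. kpt n (mm j)) z F"
  then have zK: "z \<in> K_set" and Lz: "((\<lambda>j. kpt n (mm j)) \<longlongrightarrow> z) F"
    by (auto simp: limitin_subtopology)
  have s: "(\<lambda>m. 1 / real (Suc n * Suc m)) \<longlonglongrightarrow> 0"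
  proof -
    have "(\<lambda>m. inverse (real (Suc n)) * inverse (real (Suc m))) \<longlonglongrightarrow> inverse (real (Suc n)) * 0"
      by (intro tendsto_mult tendsto_const LIMSEQ_inverse_real_of_nat)
    then show ?thesis by (simp add: field_simps)
  qed
  have "((\<lambda>j. 1 / real (Suc n * Suc (mm j))) \<longlongrightarrow> 0) F"
    using filterlim_compose[OF s mm] by simp
  then have "((\<lambda>j. kpt n (mm j)) \<longlongrightarrow> (1 / real (Suc n), 0)) F"
    unfolding kpt_def by (intro tendsto_Pair tendsto_const)
  with Lz F have "z = (1 / real (Suc n), 0)" using tendsto_unique by blast
  with zK show False unfolding K_set_def by auto
qed

lemma hm_lim_back:
  assumes hm: "homeomorphic_map X Y f" and s: "\<And>j. s j \<in> topspace X" and l: "l \<in> topspace X"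
    and L: "limitin Y (\<lambda>j. f (s j)) (f l) F"
  shows "limitin X s l F"
proof -
  obtain g where g: "homeomorphic_maps X Y f g" using hm homeomorphic_map_maps by blast
  then have "continuous_map Y X g" "\<And>x. x \<in> topspace X \<Longrightarrow> g (f x) = x"
    by (auto simp: homeomorphic_maps_def)
  from continuous_map_limit[OF this(1) L] this(2) s l show ?thesis
    by (simp add: o_def)
qed

lemma hm_lim_fwd:
  assumes hm: "homeomorphic_map X Y f" and L: "limitin X s l F"
  shows "limitin Y (\<lambda>j. f (s j)) (f l) F"
  using continuous_map_limit[OF homeomorphic_imp_continuous_map[OF hm] L] by (simp add: o_def)


lemma XK0:
  assumes g: "homeomorphic_map (top_of_set K_set) (subtopology X C) g"
  shows "g (0,0) \<in> topspace X \<inter> C" "g (kpt n m) \<in> topspace X \<inter> C"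
proof -
  have "g ` K_set = topspace X \<inter> C" using homeomorphic_imp_surjective_map[OF g] by simp
  then show "g (0,0) \<in> topspace X \<inter> C" "g (kpt n m) \<in> topspace X \<inter> C"
    using K00 kpt_in by blast+
qed

lemma XK1:
  assumes g: "homeomorphic_map (top_of_set K_set) (subtopology X C) g"
    and U: "openin X U" "g (0,0) \<in> U"
  shows "\<exists>N. \<forall>n\<ge>N. \<forall>m. g (kpt n m) \<in> U"
proof -
  have c: "continuous_map (top_of_set K_set) X g"
    using homeomorphic_imp_continuous_map[OF g] continuous_map_into_fulltopology by blast
  have "openin (top_of_set K_set) {x \<in> topspace (top_of_set K_set). g x \<in> U}"
    by (rule openin_continuous_map_preimage[OF c U(1)])
  moreover have "(0,0) \<in> {x \<in> topspace (top_of_set K_set). g x \<in> U}" using K00 U(2) by simp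
  ultimately obtain N where "\<forall>n\<ge>N. \<forall>m. kpt n m \<in> {x \<in> topspace (top_of_set K_set). g x \<in> U}"
    using K1e by blast
  then show ?thesis by auto
qed

lemma XK2:
  assumes C: "closedin X C" and g: "homeomorphic_map (top_of_set K_set) (subtopology X C) g"
    and F: "F \<noteq> bot" and mm: "filterlim mm at_top F"
  shows "\<not> limitin X (\<lambda>j. g (kpt n (mm j))) z F"
proof
  assume L: "limitin X (\<lambda>j. g (kpt n (mm j))) z F"
  have zC: "z \<in> C"
    by (rule limitin_closedin[OF L C]) (use XK0[OF g] F in auto)
  then have L2: "limitin (subtopology X C) (\<lambda>j. g (kpt n (mm j))) z F"
    using L XK0[OF g] by (simp add: limitin_subtopology)
  have "z \<in> topspace (subtopology X C)" using zC L limitin_topspace by fastforce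
  then obtain w where w: "w \<in> K_set" "z = g w"
    using homeomorphic_imp_surjective_map[OF g] by (metis imageE topspace_euclidean_subtopology)
  have "limitin (top_of_set K_set) (\<lambda>j. kpt n (mm j)) w F"
    by (rule hm_lim_back[OF g]) (use kpt_in w L2 in auto)
  then show False using K2e[OF F mm] by blast
qed

lemma XV0:
  assumes hV: "homeomorphic_map fan_V (subtopology X V') h"
  shows "h None \<in> topspace X \<inter> V'" "h (Some (Suc n, 1 / real (Suc m))) \<in> topspace X \<inter> V'"
  using homeomorphic_imp_surjective_map[OF hV] fan_vertex fan_pt[of n m] by auto

lemma XV1:
  assumes hV: "homeomorphic_map fan_V (subtopology X V') h"
  shows "limitin X (\<lambda>m. h (Some (Suc n, 1 / real (Suc m)))) (h None) sequentially"
proof -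
  have c: "continuous_map fan_V X h"
    using homeomorphic_imp_continuous_map[OF hV] continuous_map_into_fulltopology by blast
  show ?thesis using continuous_map_limit[OF c fan_V1[of n]] by (simp add: o_def)
qed

lemma XV2:
  assumes hV: "homeomorphic_map fan_V (subtopology X V') h" and nn: "filterlim nn at_top sequentially"
  shows "\<not> limitin X (\<lambda>j. h (Some (Suc (nn j), 1 / real (Suc (mm j))))) (h None) sequentially"
proof
  assume L: "limitin X (\<lambda>j. h (Some (Suc (nn j), 1 / real (Suc (mm j))))) (h None) sequentially"
  then have Lsub: "limitin (subtopology X V') (\<lambda>j. h (Some (Suc (nn j), 1 / real (Suc (mm j))))) (h None) sequentially"
    using XV0[OF hV] by (simp add: limitin_subtopology)
  then have "limitin fan_V (\<lambda>j. Some (Suc (nn j), 1 / real (Suc (mm j)))) None sequentially"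
  proof -
    have pts: "\<And>j. Some (Suc (nn j), 1 / real (Suc (mm j))) \<in> topspace fan_V" by (rule fan_pt)
    show ?thesis by (rule hm_lim_back[OF hV pts fan_vertex Lsub])
  qed
  then show False using fan_V2[OF nn] by blast
qed

lemma thin:
  fixes X :: "'a topology"
  assumes pn: "perfectly_normal_space X" and q: "q \<in> topspace X"
  shows "\<exists>D :: nat \<Rightarrow> 'a set. (\<forall>n. openin X (D n) \<and> q \<in> D n) \<and>
     (\<forall>x z nn. filterlim nn at_top sequentially \<and> (\<forall>j. x j \<in> D (nn j)) \<and> limitin X x z sequentially \<longrightarrow> z = q)"
proof -
  have t1: "t1_space X" and nor: "normal_space X" and gd: "\<And>C. closedin X C \<Longrightarrow> gdelta_in X C"
    using pn unfolding perfectly_normal_space_def by auto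
  have cq: "closedin X {q}" using t1 q by (simp add: closedin_t1_singleton)
  then have "(countable intersection_of openin X) {q}" using gd gdelta_in_alt by blast
  then obtain UU where UU: "countable UU" "\<And>U. U \<in> UU \<Longrightarrow> openin X U" "\<Inter>UU = {q}"
    unfolding intersection_of_def by blast
  define U where "U i = (if UU = {} then topspace X else from_nat_into UU i)" for i
  have Uo: "openin X (U i)" for i
    unfolding U_def by (auto intro: UU(2) from_nat_into)
  have qU: "q \<in> U i" for i
    unfolding U_def using UU(3) from_nat_into q by (metis InterD insertI1)
  have Uq: "z = q" if "z \<in> topspace X" "\<And>i. z \<in> U i" for z
  proof (cases "UU = {}")
    case True then show ?thesis using UU(3) by auto
  next
    case False
    have "z \<in> \<Inter>UU"
    proof
      fix V assume "V \<in> UU"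
      then have "V = U (to_nat_on UU V)" unfolding U_def using False UU(1) by simp
      then show "z \<in> V" using that(2) by metis
    qed
    then show ?thesis using UU(3) by auto
  qed
  have "\<forall>i. \<exists>W. openin X W \<and> q \<in> W \<and> X closure_of W \<subseteq> U i"
  proof
    fix i show "\<exists>W. openin X W \<and> q \<in> W \<and> X closure_of W \<subseteq> U i"
    proof -
      have N: "\<forall>S U. closedin X S \<and> openin X U \<and> S \<subseteq> U \<longrightarrow> (\<exists>V. openin X V \<and> S \<subseteq> V \<and> X closure_of V \<subseteq> U)"
        by (rule normal_space_alt[THEN iffD1, OF nor])
      have "{q} \<subseteq> U i" using qU[of i] by simp
      then obtain V where "openin X V" "{q} \<subseteq> V" "X closure_of V \<subseteq> U i"
        using N[rule_format, OF conjI[OF cq conjI[OF Uo[of i]]]] by blast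
      then show ?thesis by auto
    qed
  qed
  from choice[OF this] obtain W where W0: "\<forall>i. openin X (W i) \<and> q \<in> W i \<and> X closure_of (W i) \<subseteq> U i"
    by blast
  then have W: "\<And>i. openin X (W i)" "\<And>i. q \<in> W i" "\<And>i. X closure_of (W i) \<subseteq> U i"
    by auto
  define D where "D n = \<Inter>(W ` {..n})" for n
  have Do: "openin X (D n) \<and> q \<in> D n" for n
    unfolding D_def using W by (intro conjI openin_Inter) auto
  have key: "\<forall>x z nn. filterlim nn at_top sequentially \<and> (\<forall>j. x j \<in> D (nn j)) \<and> limitin X x z sequentially \<longrightarrow> z = q"
  proof (intro allI impI)
    fix x z nn assume H: "filterlim nn at_top sequentially \<and> (\<forall>j. x j \<in> D (nn j)) \<and> limitin X x z sequentially"
    then have nn: "filterlim nn at_top sequentially" and x: "\<forall>j. x j \<in> D (nn j)"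
      and L: "limitin X x z sequentially" by auto
  show "z = q"
  proof (rule Uq)
    show "z \<in> topspace X" using L limitin_topspace by fastforce
    fix i
    have "eventually (\<lambda>j. i \<le> nn j) sequentially" using nn by (simp add: filterlim_at_top)
    then have ev: "eventually (\<lambda>j. x j \<in> X closure_of (W i)) sequentially"
    proof (rule eventually_mono)
      fix j assume "i \<le> nn j"
      then have "x j \<in> W i" using x by (auto simp: D_def)
      then show "x j \<in> X closure_of (W i)"
        using closure_of_subset[OF openin_subset[OF W(1)]] by blast
    qed
    have "z \<in> X closure_of (W i)"
      using limitin_closedin[OF L closedin_closure_of ev sequentially_bot] .
    then show "z \<in> U i" using W(3) by blast
  qed
  qed
  have "(\<forall>n. openin X (D n) \<and> q \<in> D n) \<and> (\<forall>x z nn. filterlim nn at_top sequentially \<and> (\<forall>j. x j \<in> D (nn j)) \<and> limitin X x z sequentially \<longrightarrow> z = q)"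
    using Do key by blast
  then show ?thesis by blast
qed

lemma reindex:
  assumes lim: "\<And>n. limitin X (\<lambda>m. \<psi> (\<nu> n m)) q sequentially"
    and D: "\<And>n. openin X (D n) \<and> q \<in> D n"
  shows "\<exists>t. \<forall>n m. \<psi> (\<nu> n (m + t n)) \<in> D n"
proof -
  have "\<exists>N. \<forall>m\<ge>N. \<psi> (\<nu> n m) \<in> D n" for n
  proof -
    have "eventually (\<lambda>m. \<psi> (\<nu> n m) \<in> D n) sequentially"
      using limitinD[OF lim[of n] conjunct1[OF D[of n]] conjunct2[OF D[of n]]] .
    then show ?thesis by (simp add: eventually_sequentially)
  qed
  then obtain t where "\<And>n m. m \<ge> t n \<Longrightarrow> \<psi> (\<nu> n m) \<in> D n" by metis
  then have "\<forall>n m. \<psi> (\<nu> n (m + t n)) \<in> D n" by simp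
  then show ?thesis by blast
qed

lemma core:
  fixes X :: "'a topology" and b :: "nat \<Rightarrow> nat \<Rightarrow> 'a"
  assumes t1: "t1_space X" and sq: "sequential_space X"
    and bX: "\<And>n m. b n m \<in> topspace X" and pX: "p \<in> topspace X"
    and C1: "\<And>W. openin X W \<Longrightarrow> p \<in> W \<Longrightarrow> \<exists>n. eventually (\<lambda>m. b n m \<in> W) sequentially"
    and C3: "\<And>n (F :: nat filter) mm z. F \<noteq> bot \<Longrightarrow> filterlim mm at_top F \<Longrightarrow> \<not> limitin X (\<lambda>j. b n (mm j)) z F"
    and C4: "\<And>nn mm z. filterlim nn at_top sequentially \<Longrightarrow> \<not> limitin X (\<lambda>j. b (nn j) (mm j)) z sequentially"
  shows False
proof -
  have C2: "frequently (\<lambda>m. b n m \<noteq> p) sequentially" for n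
  proof (rule ccontr)
    assume "\<not> frequently (\<lambda>m. b n m \<noteq> p) sequentially"
    then have "eventually (\<lambda>m. b n m = p) sequentially" by (simp add: frequently_def)
    then have "limitin X (\<lambda>j. b n (id j)) p sequentially" using pX by (simp add: limitin_eventually)
    moreover have "filterlim id at_top sequentially" by (simp add: filterlim_ident id_def)
    ultimately show False using C3[of sequentially id n p] by simp
  qed
  define B where "B = {x. \<exists>n m. x = b n m \<and> x \<noteq> p}"
  have "seq_closed_in X B"
    unfolding seq_closed_in_def
  proof (intro conjI allI impI)
    show "B \<subseteq> topspace X" using bX by (auto simp: B_def)
    fix s z assume A: "(\<forall>j. s j \<in> B) \<and> limitin X s z sequentially"
    then have "\<forall>j. \<exists>nm. s j = b (fst nm) (snd nm) \<and> b (fst nm) (snd nm) \<noteq> p"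
      unfolding B_def by fastforce
    then obtain NM where NM: "\<And>j. s j = b (fst (NM j)) (snd (NM j)) \<and> b (fst (NM j)) (snd (NM j)) \<noteq> p"
      by metis
    define nn where "nn j = fst (NM j)" for j
    define mm where "mm j = snd (NM j)" for j
    have sj: "\<And>j. s j = b (nn j) (mm j)" and bp: "\<And>j. b (nn j) (mm j) \<noteq> p"
      using NM by (auto simp: nn_def mm_def)
    have L: "limitin X s z sequentially" using A by blast
    show "z \<in> B"
    proof (cases "\<exists>n. frequently (\<lambda>j. nn j = n) sequentially")
      case True
      then obtain n where fr: "frequently (\<lambda>j. nn j = n) sequentially" by blast
      define F where "F = inf sequentially (principal {j. nn j = n})"
      have Fnb: "F \<noteq> bot"
        using fr unfolding F_def frequently_def trivial_limit_def eventually_inf_principal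
        by simp
      have evF: "eventually (\<lambda>j. nn j = n) F" unfolding F_def eventually_inf_principal by simp
      have LF: "limitin X s z F"
        using L unfolding limitin_def F_def eventually_inf_principal by (auto elim: eventually_mono)
      show ?thesis
      proof (cases "filterlim mm at_top F")
        case True
        have "limitin X (\<lambda>j. b n (mm j)) z F"
          by (rule limitin_transform_eventually[OF _ LF]) (use evF sj in \<open>auto elim: eventually_mono\<close>)
        then show ?thesis using C3[OF Fnb True] by blast
      next
        case False
        then obtain M where M: "\<not> eventually (\<lambda>j. M \<le> mm j) F" by (auto simp: filterlim_at_top)
        have "\<exists>m<M. frequently (\<lambda>j. mm j = m) F"
        proof (rule ccontr)
          assume "\<not> (\<exists>m<M. frequently (\<lambda>j. mm j = m) F)"
          then have "\<forall>m\<in>{..<M}. eventually (\<lambda>j. mm j \<noteq> m) F"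
            by (auto simp: frequently_def)
          then have "eventually (\<lambda>j. \<forall>m\<in>{..<M}. mm j \<noteq> m) F"
            by (intro eventually_ball_finite) auto
          then have "eventually (\<lambda>j. M \<le> mm j) F"
            by (rule eventually_mono) (auto simp: not_less[symmetric])
          then show False using M by blast
        qed
        then obtain m where frm: "frequently (\<lambda>j. mm j = m) F" by blast
        define F' where "F' = inf F (principal {j. mm j = m})"
        have F'nb: "F' \<noteq> bot"
          using frm unfolding F'_def frequently_def trivial_limit_def eventually_inf_principal
          by simp
        have evF': "eventually (\<lambda>j. nn j = n \<and> mm j = m) F'"
          using evF unfolding F'_def eventually_inf_principal by (auto elim: eventually_mono)
        have LF': "limitin X s z F'"
          using LF unfolding limitin_def F'_def eventually_inf_principal by (auto elim: eventually_mono)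
        have "limitin X (\<lambda>j. b n m) z F'"
          by (rule limitin_transform_eventually[OF _ LF']) (use evF' sj in \<open>auto elim: eventually_mono\<close>)
        then have "b n m = z" using limitin_const_iff[OF t1 F'nb] by blast
        moreover obtain j where "nn j = n \<and> mm j = m" using eventually_happens'[OF F'nb evF'] by blast
        ultimately show ?thesis using bp[of j] by (auto simp: B_def)
      qed
    next
      case False
      then have "\<forall>n. eventually (\<lambda>j. nn j \<noteq> n) sequentially" by (auto simp: frequently_def)
      then have "filterlim nn at_top sequentially"
        unfolding filterlim_at_top
      proof (intro allI)
        fix M
        assume "\<forall>n. eventually (\<lambda>j. nn j \<noteq> n) sequentially"
        then have "eventually (\<lambda>j. \<forall>n\<in>{..<M}. nn j \<noteq> n) sequentially"
          by (intro eventually_ball_finite) auto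
        then show "eventually (\<lambda>j. M \<le> nn j) sequentially"
          by (rule eventually_mono) (auto simp: not_less[symmetric])
      qed
      note fl = this
      have "s = (\<lambda>j. b (nn j) (mm j))" using sj by auto
      then have Lb: "limitin X (\<lambda>j. b (nn j) (mm j)) z sequentially" using L by simp
      show ?thesis using C4[OF fl] Lb by blast
    qed
  qed
  then have cB: "closedin X B" using sq unfolding sequential_space_def by blast
  have "p \<in> X closure_of B"
    unfolding in_closure_of
  proof (intro conjI allI impI pX)
    fix T assume T: "p \<in> T \<and> openin X T"
    then obtain n where ev: "eventually (\<lambda>m. b n m \<in> T) sequentially" using C1 by blast
    have "frequently (\<lambda>m. b n m \<noteq> p \<and> b n m \<in> T) sequentially"
      by (rule frequently_eventually_frequently[OF C2[of n] ev])
    then obtain m where "b n m \<in> T" "b n m \<noteq> p" by (metis (mono_tags, lifting) frequently_ex)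
    then show "\<exists>y. y \<in> B \<and> y \<in> T" by (auto simp: B_def)
  qed
  then have "p \<in> B" using closure_of_closedin[OF cB] by simp
  then show False by (simp add: B_def)
qed


lemma limitin_filterlim_compose:
  assumes "limitin X f l F2" "filterlim g F2 F1"
  shows "limitin X (\<lambda>x. f (g x)) l F1"
proof -
  have "eventually (\<lambda>x. f (g x) \<in> U) F1" if "openin X U" "l \<in> U" for U
  proof -
    have "eventually (\<lambda>x. f x \<in> U) F2" using assms(1) that by (simp add: limitin_def)
    then have "eventually (\<lambda>x. f x \<in> U) (filtermap g F1)"
      by (rule filter_leD[OF assms(2)[unfolded filterlim_def]])
    then show ?thesis by (simp add: eventually_filtermap)
  qed
  then show ?thesis using assms(1) by (simp add: limitin_def)
qed

lemma tg_unfold: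
  assumes "topological_group G mul e iv"
  shows "\<And>x y. x \<in> topspace G \<Longrightarrow> y \<in> topspace G \<Longrightarrow> mul x y \<in> topspace G"
    and "\<And>x y z. x \<in> topspace G \<Longrightarrow> y \<in> topspace G \<Longrightarrow> z \<in> topspace G \<Longrightarrow> mul (mul x y) z = mul x (mul y z)"
    and "e \<in> topspace G"
    and "\<And>x. x \<in> topspace G \<Longrightarrow> mul e x = x"
    and "\<And>x. x \<in> topspace G \<Longrightarrow> mul x e = x"
    and "\<And>x. x \<in> topspace G \<Longrightarrow> iv x \<in> topspace G"
    and "\<And>x. x \<in> topspace G \<Longrightarrow> mul (iv x) x = e"
    and "\<And>x. x \<in> topspace G \<Longrightarrow> mul x (iv x) = e"
    and "continuous_map (prod_topology G G) G (\<lambda>(x, y). mul x y)"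
    and "continuous_map G G iv"
  using assms unfolding topological_group_def by auto

lemma tg_alg:
  assumes tg: "topological_group G mul e iv" and x: "x \<in> topspace G" and y: "y \<in> topspace G"
  shows "mul (mul x y) (iv y) = x" "mul (iv x) (mul x y) = y" "mul x (mul (iv x) y) = y" "iv e = e"
proof -
  note T = tg_unfold[OF tg]
  show "mul (mul x y) (iv y) = x" using T x y by simp
  show "mul (iv x) (mul x y) = y" using T x y by (metis (no_types))
  show "mul x (mul (iv x) y) = y" using T x y by (metis (no_types))
  have "mul (iv e) e = e" using T(7)[OF T(3)] .
  moreover have "mul (iv e) e = iv e" using T(5)[OF T(6)[OF T(3)]] .
  ultimately show "iv e = e" by simp
qed

lemma tg_lim_mul:
  assumes tg: "topological_group G mul e iv" and a: "limitin G a x F" and b: "limitin G b y F"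
  shows "limitin G (\<lambda>j. mul (a j) (b j)) (mul x y) F"
proof -
  have "limitin (prod_topology G G) (\<lambda>j. (a j, b j)) (x, y) F"
    using a b by (simp add: limitin_pairwise o_def)
  from continuous_map_limit[OF tg_unfold(9)[OF tg] this] show ?thesis by (simp add: o_def)
qed

lemma tg_lim_iv:
  assumes tg: "topological_group G mul e iv" and a: "limitin G a x F"
  shows "limitin G (\<lambda>j. iv (a j)) (iv x) F"
  using continuous_map_limit[OF tg_unfold(10)[OF tg] a] by (simp add: o_def)

lemma hm_sub_facts:
  assumes F: "homeomorphic_maps X (subtopology G M) F F'"
  shows "\<And>x. x \<in> topspace X \<Longrightarrow> F x \<in> topspace G \<and> F x \<in> M"
    and "\<And>x. x \<in> topspace X \<Longrightarrow> F' (F x) = x"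
    and "\<And>y. y \<in> topspace G \<Longrightarrow> y \<in> M \<Longrightarrow> F (F' y) = y"
    and "\<And>y. y \<in> topspace G \<Longrightarrow> y \<in> M \<Longrightarrow> F' y \<in> topspace X"
    and "continuous_map X G F"
    and "continuous_map (subtopology G M) X F'"
proof -
  have c1: "continuous_map X (subtopology G M) F" and c2: "continuous_map (subtopology G M) X F'"
    using F by (auto simp: homeomorphic_maps_def)
  show "\<And>x. x \<in> topspace X \<Longrightarrow> F x \<in> topspace G \<and> F x \<in> M"
    using continuous_map_image_subset_topspace[OF c1] by auto
  show "\<And>y. y \<in> topspace G \<Longrightarrow> y \<in> M \<Longrightarrow> F' y \<in> topspace X"
    using continuous_map_image_subset_topspace[OF c2] by auto
  show "\<And>x. x \<in> topspace X \<Longrightarrow> F' (F x) = x" "\<And>y. y \<in> topspace G \<Longrightarrow> y \<in> M \<Longrightarrow> F (F' y) = y"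
    using F by (auto simp: homeomorphic_maps_def)
  show "continuous_map X G F" using c1 continuous_map_into_fulltopology by blast
  show "continuous_map (subtopology G M) X F'" by (rule c2)
qed

lemma hm_sub_lim:
  assumes F: "homeomorphic_maps X (subtopology G M) F F'"
    and s: "\<And>j. s j \<in> topspace X" and w: "w \<in> topspace G" "w \<in> M"
    and L: "limitin G (\<lambda>j. F (s j)) w Fi"
  shows "limitin X s (F' w) Fi"
proof -
  note H = hm_sub_facts[OF F]
  have hm: "homeomorphic_map X (subtopology G M) F"
    using F homeomorphic_map_maps by blast
  have "limitin (subtopology G M) (\<lambda>j. F (s j)) w Fi"
    using L w H(1)[OF s] by (simp add: limitin_subtopology)
  then have "limitin (subtopology G M) (\<lambda>j. F (s j)) (F (F' w)) Fi" using H(3) w by simp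
  then show ?thesis by (rule hm_lim_back[OF hm s H(4)[OF w]])
qed

lemma hm_sub_lim_fwd:
  assumes F: "homeomorphic_maps X (subtopology G M) F F'" and L: "limitin X s l Fi"
  shows "limitin G (\<lambda>j. F (s j)) (F l) Fi"
  using continuous_map_limit[OF hm_sub_facts(5)[OF F] L] by (simp add: o_def)

lemma C1gen:
  fixes \<kappa> v :: "nat \<Rightarrow> nat \<Rightarrow> 'a"
  assumes st: "continuous_map (prod_topology X X) X st" and W: "openin X W" "st (k0, y0) \<in> W"
    and k0: "k0 \<in> topspace X" "y0 \<in> topspace X"
    and K1: "\<And>U. openin X U \<Longrightarrow> k0 \<in> U \<Longrightarrow> \<exists>N. \<forall>n\<ge>N. \<forall>m. \<kappa> n m \<in> U"
    and V1: "\<And>n. limitin X (v n) y0 sequentially"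
  shows "\<exists>n. eventually (\<lambda>m. st (\<kappa> n m, v n m) \<in> W) sequentially"
proof -
  have o: "openin (prod_topology X X) {z \<in> topspace (prod_topology X X). st z \<in> W}"
    by (rule openin_continuous_map_preimage[OF st W(1)])
  have "(k0, y0) \<in> {z \<in> topspace (prod_topology X X). st z \<in> W}" using k0 W(2) by simp
  then obtain U1 U2 where U: "openin X U1" "openin X U2" "k0 \<in> U1" "y0 \<in> U2"
    "U1 \<times> U2 \<subseteq> {z \<in> topspace (prod_topology X X). st z \<in> W}"
    using o unfolding openin_prod_topology_alt by meson
  obtain N where N: "\<forall>n\<ge>N. \<forall>m. \<kappa> n m \<in> U1" using K1[OF U(1) U(3)] by blast
  have "eventually (\<lambda>m. v N m \<in> U2) sequentially" using V1[of N] U(2,4) by (simp add: limitin_def)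
  then have "eventually (\<lambda>m. st (\<kappa> N m, v N m) \<in> W) sequentially"
  proof (rule eventually_mono)
    fix m assume "v N m \<in> U2"
    then have "(\<kappa> N m, v N m) \<in> U1 \<times> U2" using N by auto
    then show "st (\<kappa> N m, v N m) \<in> W" using U(5) by blast
  qed
  then show ?thesis by blast
qed

lemma K1_seq:
  fixes \<kappa> :: "nat \<Rightarrow> nat \<Rightarrow> 'a"
  assumes K1: "\<And>U. openin X U \<Longrightarrow> k0 \<in> U \<Longrightarrow> \<exists>N. \<forall>n\<ge>N. \<forall>m. \<kappa> n m \<in> U"
    and k0: "k0 \<in> topspace X" and nn: "filterlim nn at_top sequentially"
  shows "limitin X (\<lambda>j. \<kappa> (nn j) (mm j)) k0 sequentially"
  unfolding limitin_def
proof (intro conjI allI impI k0)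
  fix U assume "openin X U \<and> k0 \<in> U"
  then obtain N where N: "\<forall>n\<ge>N. \<forall>m. \<kappa> n m \<in> U" using K1 by blast
  have "eventually (\<lambda>j. N \<le> nn j) sequentially" using nn by (simp add: filterlim_at_top)
  then show "eventually (\<lambda>j. \<kappa> (nn j) (mm j) \<in> U) sequentially"
    by (rule eventually_mono) (use N in blast)
qed


lemma partB:
  fixes X :: "'a topology" and G :: "'g topology" and \<kappa> \<nu> :: "nat \<Rightarrow> nat \<Rightarrow> 'a"
  assumes pn: "perfectly_normal_space X" and sq: "sequential_space X"
    and kX: "\<And>n m. \<kappa> n m \<in> topspace X" and k0X: "k0 \<in> topspace X"
    and K1: "\<And>U. openin X U \<Longrightarrow> k0 \<in> U \<Longrightarrow> \<exists>N. \<forall>n\<ge>N. \<forall>m. \<kappa> n m \<in> U"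
    and K2: "\<And>n (Fi::nat filter) mm z. Fi \<noteq> bot \<Longrightarrow> filterlim mm at_top Fi \<Longrightarrow> \<not> limitin X (\<lambda>j. \<kappa> n (mm j)) z Fi"
    and vX: "\<And>n m. \<nu> n m \<in> topspace X" and y0X: "y0 \<in> topspace X"
    and V1: "\<And>n. limitin X (\<nu> n) y0 sequentially"
    and V2: "\<And>nn mm. filterlim nn at_top sequentially \<Longrightarrow> \<not> limitin X (\<lambda>j. \<nu> (nn j) (mm j)) y0 sequentially"
    and tg: "topological_group G mul e iv" and Mc: "closedin G M"
    and Mm: "multiplicative_subset mul M"
    and hmF: "homeomorphic_maps X (subtopology G M) F F'"
  shows False
proof -
  note T = tg_unfold[OF tg]
  note H = hm_sub_facts[OF hmF]
  have t1: "t1_space X" using pn by (simp add: perfectly_normal_space_def)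
  have mulM: "\<And>x y. x \<in> M \<Longrightarrow> y \<in> M \<Longrightarrow> mul x y \<in> M" using Mm by (simp add: multiplicative_subset_def)
  obtain D :: "nat \<Rightarrow> 'a set" where DD: "(\<forall>n. openin X (D n) \<and> y0 \<in> D n) \<and>
     (\<forall>x z nn. filterlim nn at_top sequentially \<and> (\<forall>j. x j \<in> D (nn j)) \<and> limitin X x z sequentially \<longrightarrow> z = y0)"
    using thin[OF pn y0X] by blast
  have D: "\<And>n. openin X (D n) \<and> y0 \<in> D n" using DD by blast
  have Dk: "\<And>x z nn. filterlim nn at_top sequentially \<Longrightarrow> (\<forall>j. x j \<in> D (nn j)) \<Longrightarrow> limitin X x z sequentially \<Longrightarrow> z = y0"
    using DD by blast
  obtain t where t: "\<forall>n m. \<nu> n (m + t n) \<in> D n"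
    using reindex[of X "\<lambda>x. x" \<nu> y0 D] V1 D by blast
  define v where "v n m = \<nu> n (m + t n)" for n m
  have vX': "\<And>n m. v n m \<in> topspace X" by (simp add: v_def vX)
  have vD: "\<And>n m. v n m \<in> D n" using t by (simp add: v_def)
  have V1': "limitin X (v n) y0 sequentially" for n
    unfolding v_def using limitin_sequentially_offset[OF V1[of n], of "t n"] by simp
  define st where "st = (\<lambda>z. F' (mul (F (fst z)) (F (snd z))))"
  have stc: "continuous_map (prod_topology X X) X st"
  proof -
    have c0: "continuous_map (prod_topology X X) (prod_topology G G) (\<lambda>z. (F (fst z), F (snd z)))"
      by (intro continuous_map_pairedI continuous_map_compose[OF continuous_map_fst H(5), unfolded o_def]
          continuous_map_compose[OF continuous_map_snd H(5), unfolded o_def])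
    have c1: "continuous_map (prod_topology X X) G (\<lambda>z. mul (F (fst z)) (F (snd z)))"
      using continuous_map_compose[OF c0 T(9)] by (simp add: o_def case_prod_beta)
    have "continuous_map (prod_topology X X) (subtopology G M) (\<lambda>z. mul (F (fst z)) (F (snd z)))"
      using c1 H(1) mulM by (auto simp: continuous_map_in_subtopology)
    from continuous_map_compose[OF this H(6)] show ?thesis by (simp add: st_def o_def)
  qed
  have Fst: "F (st (x, y)) = mul (F x) (F y)" "st (x, y) \<in> topspace X"
    if "x \<in> topspace X" "y \<in> topspace X" for x y
  proof -
    have "mul (F x) (F y) \<in> topspace G" "mul (F x) (F y) \<in> M" using that H(1) T(1) mulM by auto
    then show "F (st (x, y)) = mul (F x) (F y)" "st (x, y) \<in> topspace X"
      using H(3,4) by (auto simp: st_def)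
  qed
  define b where "b n m = st (\<kappa> n m, v n m)" for n m
  define p where "p = st (k0, y0)"
  show False
  proof (rule core[OF t1 sq, of b p])
    show "\<And>n m. b n m \<in> topspace X" unfolding b_def using Fst kX vX' by blast
    show "p \<in> topspace X" unfolding p_def using Fst k0X y0X by blast
    show "\<exists>n. eventually (\<lambda>m. b n m \<in> W) sequentially" if "openin X W" "p \<in> W" for W
    proof -
      have "\<exists>n. eventually (\<lambda>m. st (\<kappa> n m, v n m) \<in> W) sequentially"
        by (rule C1gen[OF stc that(1) _ k0X y0X]) (use that(2) K1 V1' in \<open>auto simp: p_def\<close>)
      then show ?thesis unfolding b_def .
    qed
    show "\<not> limitin X (\<lambda>j. b n (mm j)) z Fi" if Fi: "Fi \<noteq> bot" and mm: "filterlim mm at_top Fi" for n and Fi :: "nat filter" and mm z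
    proof
      assume L: "limitin X (\<lambda>j. b n (mm j)) z Fi"
      have Lb: "limitin G (\<lambda>j. F (b n (mm j))) (F z) Fi" by (rule hm_sub_lim_fwd[OF hmF L])
      have Lv: "limitin G (\<lambda>j. F (v n (mm j))) (F y0) Fi"
        by (rule hm_sub_lim_fwd[OF hmF limitin_filterlim_compose[OF V1' mm]])
      have L2: "limitin G (\<lambda>j. mul (F (b n (mm j))) (iv (F (v n (mm j))))) (mul (F z) (iv (F y0))) Fi"
        by (rule tg_lim_mul[OF tg Lb tg_lim_iv[OF tg Lv]])
      have eq: "mul (F (b n (mm j))) (iv (F (v n (mm j)))) = F (\<kappa> n (mm j))" for j
        unfolding b_def using Fst(1)[OF kX vX'] tg_alg(1)[OF tg] H(1)[OF kX] H(1)[OF vX'] by simp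
      have Lk: "limitin G (\<lambda>j. F (\<kappa> n (mm j))) (mul (F z) (iv (F y0))) Fi" using L2 eq by simp
      have wG: "mul (F z) (iv (F y0)) \<in> topspace G" using Lk limitin_topspace by fastforce
      have wM: "mul (F z) (iv (F y0)) \<in> M"
        by (rule limitin_closedin[OF Lk Mc _ Fi]) (use H(1)[OF kX] in simp)
      have "limitin X (\<lambda>j. \<kappa> n (mm j)) (F' (mul (F z) (iv (F y0)))) Fi"
        by (rule hm_sub_lim[OF hmF kX wG wM Lk])
      then show False using K2[OF Fi mm] by blast
    qed
    show "\<not> limitin X (\<lambda>j. b (nn j) (mm j)) z sequentially" if nn: "filterlim nn at_top sequentially" for nn mm z
    proof
      assume L: "limitin X (\<lambda>j. b (nn j) (mm j)) z sequentially"
      have Lb: "limitin G (\<lambda>j. F (b (nn j) (mm j))) (F z) sequentially" by (rule hm_sub_lim_fwd[OF hmF L])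
      have Lk: "limitin G (\<lambda>j. F (\<kappa> (nn j) (mm j))) (F k0) sequentially"
        by (rule hm_sub_lim_fwd[OF hmF K1_seq[OF K1 k0X nn]])
      have L2: "limitin G (\<lambda>j. mul (iv (F (\<kappa> (nn j) (mm j)))) (F (b (nn j) (mm j)))) (mul (iv (F k0)) (F z)) sequentially"
        by (rule tg_lim_mul[OF tg tg_lim_iv[OF tg Lk] Lb])
      have eq: "mul (iv (F (\<kappa> (nn j) (mm j)))) (F (b (nn j) (mm j))) = F (v (nn j) (mm j))" for j
        unfolding b_def using Fst(1)[OF kX vX'] tg_alg(2)[OF tg] H(1)[OF kX] H(1)[OF vX'] by simp
      have Lv: "limitin G (\<lambda>j. F (v (nn j) (mm j))) (mul (iv (F k0)) (F z)) sequentially" using L2 eq by simp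
      have wG: "mul (iv (F k0)) (F z) \<in> topspace G" using Lv limitin_topspace by fastforce
      have wM: "mul (iv (F k0)) (F z) \<in> M"
        by (rule limitin_closedin[OF Lv Mc]) (use H(1)[OF vX'] in simp_all)
      have LvX: "limitin X (\<lambda>j. v (nn j) (mm j)) (F' (mul (iv (F k0)) (F z))) sequentially"
        by (rule hm_sub_lim[OF hmF vX' wG wM Lv])
      have "F' (mul (iv (F k0)) (F z)) = y0"
        by (rule Dk[OF nn _ LvX]) (simp add: vD)
      with LvX have "limitin X (\<lambda>j. \<nu> (nn j) (mm j + t (nn j))) y0 sequentially" by (simp add: v_def)
      then show False using V2[OF nn, of "\<lambda>j. mm j + t (nn j)"] by simp
    qed
  qed
qed


lemma partC:
  fixes X :: "'a topology" and G :: "'g topology" and \<kappa> \<nu> :: "nat \<Rightarrow> nat \<Rightarrow> 'a"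
  assumes pn: "perfectly_normal_space X" and sq: "sequential_space X"
    and kX: "\<And>n m. \<kappa> n m \<in> topspace X" and k0X: "k0 \<in> topspace X"
    and K1: "\<And>U. openin X U \<Longrightarrow> k0 \<in> U \<Longrightarrow> \<exists>N. \<forall>n\<ge>N. \<forall>m. \<kappa> n m \<in> U"
    and K2: "\<And>n (Fi::nat filter) mm z. Fi \<noteq> bot \<Longrightarrow> filterlim mm at_top Fi \<Longrightarrow> \<not> limitin X (\<lambda>j. \<kappa> n (mm j)) z Fi"
    and vX: "\<And>n m. \<nu> n m \<in> topspace X" and y0X: "y0 \<in> topspace X"
    and V1: "\<And>n. limitin X (\<nu> n) y0 sequentially"
    and V2: "\<And>nn mm. filterlim nn at_top sequentially \<Longrightarrow> \<not> limitin X (\<lambda>j. \<nu> (nn j) (mm j)) y0 sequentially"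
    and tg: "topological_group G mul e iv"
    and Mm: "multiplicative_subset mul M"
    and hmF: "homeomorphic_maps X (subtopology G M) F F'"
    and Fy0: "F y0 = e"
  shows False
proof -
  note T = tg_unfold[OF tg]
  note H = hm_sub_facts[OF hmF]
  have t1: "t1_space X" using pn by (simp add: perfectly_normal_space_def)
  have mulM: "\<And>x y. x \<in> M \<Longrightarrow> y \<in> M \<Longrightarrow> mul x y \<in> M" using Mm by (simp add: multiplicative_subset_def)
  define st where "st = (\<lambda>z. F' (mul (F (fst z)) (F (snd z))))"
  have stc: "continuous_map (prod_topology X X) X st"
  proof -
    have c0: "continuous_map (prod_topology X X) (prod_topology G G) (\<lambda>z. (F (fst z), F (snd z)))"
      by (intro continuous_map_pairedI continuous_map_compose[OF continuous_map_fst H(5), unfolded o_def]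
          continuous_map_compose[OF continuous_map_snd H(5), unfolded o_def])
    have c1: "continuous_map (prod_topology X X) G (\<lambda>z. mul (F (fst z)) (F (snd z)))"
      using continuous_map_compose[OF c0 T(9)] by (simp add: o_def case_prod_beta)
    have "continuous_map (prod_topology X X) (subtopology G M) (\<lambda>z. mul (F (fst z)) (F (snd z)))"
      using c1 H(1) mulM by (auto simp: continuous_map_in_subtopology)
    from continuous_map_compose[OF this H(6)] show ?thesis by (simp add: st_def o_def)
  qed
  have Fst: "F (st (x, y)) = mul (F x) (F y)" "st (x, y) \<in> topspace X"
    if "x \<in> topspace X" "y \<in> topspace X" for x y
  proof -
    have "mul (F x) (F y) \<in> topspace G" "mul (F x) (F y) \<in> M" using that H(1) T(1) mulM by auto
    then show "F (st (x, y)) = mul (F x) (F y)" "st (x, y) \<in> topspace X"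
      using H(3,4) by (auto simp: st_def)
  qed
  define \<psi> where "\<psi> x = st (k0, x)" for x
  have psic: "continuous_map X X \<psi>"
  proof -
    have "continuous_map X (prod_topology X X) (\<lambda>x. (k0, x))"
      using k0X by (intro continuous_map_pairedI) (auto simp: continuous_map_id[unfolded id_def])
    moreover have "\<psi> = (\<lambda>x. st (k0, x))" by (rule ext) (simp add: \<psi>_def)
    ultimately show ?thesis using continuous_map_compose[of X "prod_topology X X" "\<lambda>x. (k0, x)" X st] stc
      by (simp add: o_def)
  qed
  have psi0: "\<psi> y0 = k0"
  proof -
    have "F (\<psi> y0) = F k0" unfolding \<psi>_def using Fst(1)[OF k0X y0X] Fy0 T(5) H(1)[OF k0X] by simp
    then have "F' (F (\<psi> y0)) = F' (F k0)" by simp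
    then show ?thesis using H(2) Fst(2)[OF k0X y0X] k0X by (simp add: \<psi>_def)
  qed
  obtain D :: "nat \<Rightarrow> 'a set" where DD: "(\<forall>n. openin X (D n) \<and> k0 \<in> D n) \<and>
     (\<forall>x z nn. filterlim nn at_top sequentially \<and> (\<forall>j. x j \<in> D (nn j)) \<and> limitin X x z sequentially \<longrightarrow> z = k0)"
    using thin[OF pn k0X] by blast
  have D: "\<And>n. openin X (D n) \<and> k0 \<in> D n" using DD by blast
  have Dk: "\<And>x z nn. filterlim nn at_top sequentially \<Longrightarrow> (\<forall>j. x j \<in> D (nn j)) \<Longrightarrow> limitin X x z sequentially \<Longrightarrow> z = k0"
    using DD by blast
  have limpsi: "limitin X (\<lambda>m. \<psi> (\<nu> n m)) k0 sequentially" for n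
    using continuous_map_limit[OF psic V1[of n]] psi0 by (simp add: o_def)
  obtain t where t: "\<forall>n m. \<psi> (\<nu> n (m + t n)) \<in> D n"
    using reindex[of X \<psi> \<nu> k0 D] limpsi D by blast
  define v where "v n m = \<nu> n (m + t n)" for n m
  have vX': "\<And>n m. v n m \<in> topspace X" by (simp add: v_def vX)
  have vD: "\<And>n m. \<psi> (v n m) \<in> D n" using t by (simp add: v_def)
  have V1': "limitin X (v n) y0 sequentially" for n
    unfolding v_def using limitin_sequentially_offset[OF V1[of n], of "t n"] by simp
  define b where "b n m = st (\<kappa> n m, v n m)" for n m
  define p where "p = st (k0, y0)"
  show False
  proof (rule core[OF t1 sq, of b p])
    show "\<And>n m. b n m \<in> topspace X" unfolding b_def using Fst kX vX' by blast
    show "p \<in> topspace X" unfolding p_def using Fst k0X y0X by blast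
    show "\<exists>n. eventually (\<lambda>m. b n m \<in> W) sequentially" if "openin X W" "p \<in> W" for W
    proof -
      have "\<exists>n. eventually (\<lambda>m. st (\<kappa> n m, v n m) \<in> W) sequentially"
        by (rule C1gen[OF stc that(1) _ k0X y0X]) (use that(2) K1 V1' in \<open>auto simp: p_def\<close>)
      then show ?thesis unfolding b_def .
    qed
    show "\<not> limitin X (\<lambda>j. b n (mm j)) z Fi" if Fi: "Fi \<noteq> bot" and mm: "filterlim mm at_top Fi" for n and Fi :: "nat filter" and mm z
    proof
      assume L: "limitin X (\<lambda>j. b n (mm j)) z Fi"
      have zX: "z \<in> topspace X" using L limitin_topspace by fastforce
      have Lb: "limitin G (\<lambda>j. F (b n (mm j))) (F z) Fi" by (rule hm_sub_lim_fwd[OF hmF L])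
      have Lv: "limitin G (\<lambda>j. F (v n (mm j))) (F y0) Fi"
        by (rule hm_sub_lim_fwd[OF hmF limitin_filterlim_compose[OF V1' mm]])
      have L2: "limitin G (\<lambda>j. mul (F (b n (mm j))) (iv (F (v n (mm j))))) (mul (F z) (iv (F y0))) Fi"
        by (rule tg_lim_mul[OF tg Lb tg_lim_iv[OF tg Lv]])
      have eq: "mul (F (b n (mm j))) (iv (F (v n (mm j)))) = F (\<kappa> n (mm j))" for j
        unfolding b_def using Fst(1)[OF kX vX'] tg_alg(1)[OF tg] H(1)[OF kX] H(1)[OF vX'] by simp
      have w: "mul (F z) (iv (F y0)) = F z"
        using Fy0 tg_alg(4)[OF tg T(3) T(3)] T(5) H(1)[OF zX] by simp
      have Lk: "limitin G (\<lambda>j. F (\<kappa> n (mm j))) (F z) Fi" using L2 eq w by simp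
      have "limitin X (\<lambda>j. \<kappa> n (mm j)) (F' (F z)) Fi"
        by (rule hm_sub_lim[OF hmF kX _ _ Lk]) (use H(1)[OF zX] in auto)
      then show False using K2[OF Fi mm] by blast
    qed
    show "\<not> limitin X (\<lambda>j. b (nn j) (mm j)) z sequentially" if nn: "filterlim nn at_top sequentially" for nn mm z
    proof
      assume L: "limitin X (\<lambda>j. b (nn j) (mm j)) z sequentially"
      have zX: "z \<in> topspace X" using L limitin_topspace by fastforce
      have Lb: "limitin G (\<lambda>j. F (b (nn j) (mm j))) (F z) sequentially" by (rule hm_sub_lim_fwd[OF hmF L])
      have Lk: "limitin G (\<lambda>j. F (\<kappa> (nn j) (mm j))) (F k0) sequentially"
        by (rule hm_sub_lim_fwd[OF hmF K1_seq[OF K1 k0X nn]])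
      have L2: "limitin G (\<lambda>j. mul (F k0) (mul (iv (F (\<kappa> (nn j) (mm j)))) (F (b (nn j) (mm j)))))
                   (mul (F k0) (mul (iv (F k0)) (F z))) sequentially"
        by (rule tg_lim_mul[OF tg _ tg_lim_mul[OF tg tg_lim_iv[OF tg Lk] Lb]]) (use H(1)[OF k0X] in simp)
      have eq: "mul (F k0) (mul (iv (F (\<kappa> (nn j) (mm j)))) (F (b (nn j) (mm j)))) = F (\<psi> (v (nn j) (mm j)))" for j
        unfolding b_def \<psi>_def using Fst(1)[OF kX vX'] Fst(1)[OF k0X vX'] tg_alg(2)[OF tg] H(1)[OF kX] H(1)[OF vX'] by simp
      have w: "mul (F k0) (mul (iv (F k0)) (F z)) = F z"
        using tg_alg(3)[OF tg] H(1)[OF zX] H(1)[OF k0X] by simp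
      have Lpsi: "limitin G (\<lambda>j. F (\<psi> (v (nn j) (mm j)))) (F z) sequentially" using L2 eq w by simp
      have psiX: "\<And>j. \<psi> (v (nn j) (mm j)) \<in> topspace X" unfolding \<psi>_def using Fst(2)[OF k0X vX'] by blast
      have "limitin X (\<lambda>j. \<psi> (v (nn j) (mm j))) (F' (F z)) sequentially"
        by (rule hm_sub_lim[OF hmF psiX _ _ Lpsi]) (use H(1)[OF zX] in auto)
      then have Lz: "limitin X (\<lambda>j. \<psi> (v (nn j) (mm j))) z sequentially" using H(2)[OF zX] by simp
      have zk: "z = k0" by (rule Dk[OF nn _ Lz]) (simp add: vD)
      have L3: "limitin G (\<lambda>j. mul (iv (F k0)) (F (\<psi> (v (nn j) (mm j))))) (mul (iv (F k0)) (F z)) sequentially"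
        by (rule tg_lim_mul[OF tg _ Lpsi]) (use H(1)[OF k0X] T(6) in simp)
      have eq2: "mul (iv (F k0)) (F (\<psi> (v (nn j) (mm j)))) = F (v (nn j) (mm j))" for j
        unfolding \<psi>_def using Fst(1)[OF k0X vX'] tg_alg(2)[OF tg] H(1)[OF k0X] H(1)[OF vX'] by simp
      have w2: "mul (iv (F k0)) (F z) = F y0" using zk Fy0 T(7) H(1)[OF k0X] by simp
      have Lv: "limitin G (\<lambda>j. F (v (nn j) (mm j))) (F y0) sequentially" using L3 eq2 w2 by simp
      have "limitin X (\<lambda>j. v (nn j) (mm j)) (F' (F y0)) sequentially"
        by (rule hm_sub_lim[OF hmF vX' _ _ Lv]) (use H(1)[OF y0X] in auto)
      then have "limitin X (\<lambda>j. \<nu> (nn j) (mm j + t (nn j))) y0 sequentially"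
        using H(2)[OF y0X] by (simp add: v_def)
      then show False using V2[OF nn, of "\<lambda>j. mm j + t (nn j)"] by simp
    qed
  qed
qed


lemma lts_scale_cont:
  fixes T :: "'v::real_vector topology"
  assumes "linear_topological_space T"
  shows "continuous_map T T (\<lambda>x. c *\<^sub>R x)"
proof -
  have sc: "continuous_map (prod_topology euclideanreal T) T (\<lambda>(a, x). a *\<^sub>R x)"
    using assms by (simp add: linear_topological_space_def)
  have "continuous_map T (prod_topology euclideanreal T) (\<lambda>x. (c, x))"
    by (intro continuous_map_pairedI) (auto simp: continuous_map_id[unfolded id_def])
  from continuous_map_compose[OF this sc] show ?thesis by (simp add: o_def)
qed

lemma lts_add_cont2:
  fixes T :: "'v::real_vector topology"
  assumes "linear_topological_space T" "continuous_map Z T f" "continuous_map Z T g"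
  shows "continuous_map Z T (\<lambda>z. f z + g z)"
proof -
  have ad: "continuous_map (prod_topology T T) T (\<lambda>(x, y). x + y)"
    using assms(1) by (simp add: linear_topological_space_def)
  have "continuous_map Z (prod_topology T T) (\<lambda>z. (f z, g z))"
    using assms(2,3) by (intro continuous_map_pairedI)
  from continuous_map_compose[OF this ad] show ?thesis by (simp add: o_def)
qed

lemma lts_lim_add:
  fixes T :: "'v::real_vector topology"
  assumes "linear_topological_space T" "limitin T a x F" "limitin T b y F"
  shows "limitin T (\<lambda>j. a j + b j) (x + y) F"
proof -
  have ad: "continuous_map (prod_topology T T) T (\<lambda>(x, y). x + y)"
    using assms(1) by (simp add: linear_topological_space_def)
  have "limitin (prod_topology T T) (\<lambda>j. (a j, b j)) (x, y) F"
    using assms(2,3) by (simp add: limitin_pairwise o_def)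
  from continuous_map_limit[OF ad this] show ?thesis by (simp add: o_def)
qed

lemma lts_lim_scale:
  fixes T :: "'v::real_vector topology"
  assumes "linear_topological_space T" "limitin T a x F"
  shows "limitin T (\<lambda>j. c *\<^sub>R a j) (c *\<^sub>R x) F"
  using continuous_map_limit[OF lts_scale_cont[OF assms(1)] assms(2)] by (simp add: o_def)

lemma partA:
  fixes X :: "'a topology" and T :: "'v::real_vector topology" and \<kappa> \<nu> :: "nat \<Rightarrow> nat \<Rightarrow> 'a"
  assumes pn: "perfectly_normal_space X" and sq: "sequential_space X"
    and kX: "\<And>n m. \<kappa> n m \<in> topspace X" and k0X: "k0 \<in> topspace X"
    and K1: "\<And>U. openin X U \<Longrightarrow> k0 \<in> U \<Longrightarrow> \<exists>N. \<forall>n\<ge>N. \<forall>m. \<kappa> n m \<in> U"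
    and K2: "\<And>n (Fi::nat filter) mm z. Fi \<noteq> bot \<Longrightarrow> filterlim mm at_top Fi \<Longrightarrow> \<not> limitin X (\<lambda>j. \<kappa> n (mm j)) z Fi"
    and vX: "\<And>n m. \<nu> n m \<in> topspace X" and y0X: "y0 \<in> topspace X"
    and V1: "\<And>n. limitin X (\<nu> n) y0 sequentially"
    and V2: "\<And>nn mm. filterlim nn at_top sequentially \<Longrightarrow> \<not> limitin X (\<lambda>j. \<nu> (nn j) (mm j)) y0 sequentially"
    and lts: "linear_topological_space T" and cv: "convex C" and Cc: "closedin T C"
    and hmF: "homeomorphic_maps X (subtopology T C) F F'"
  shows False
proof -
  note H = hm_sub_facts[OF hmF]
  have TU: "topspace T = UNIV" using lts by (simp add: linear_topological_space_def)
  have t1: "t1_space X" using pn by (simp add: perfectly_normal_space_def)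
  have midC: "\<And>x y. x \<in> C \<Longrightarrow> y \<in> C \<Longrightarrow> (1/2) *\<^sub>R x + (1/2) *\<^sub>R y \<in> C"
    using cv by (intro convexD) auto
  obtain D :: "nat \<Rightarrow> 'a set" where DD: "(\<forall>n. openin X (D n) \<and> y0 \<in> D n) \<and>
     (\<forall>x z nn. filterlim nn at_top sequentially \<and> (\<forall>j. x j \<in> D (nn j)) \<and> limitin X x z sequentially \<longrightarrow> z = y0)"
    using thin[OF pn y0X] by blast
  have D: "\<And>n. openin X (D n) \<and> y0 \<in> D n" using DD by blast
  have Dk: "\<And>x z nn. filterlim nn at_top sequentially \<Longrightarrow> (\<forall>j. x j \<in> D (nn j)) \<Longrightarrow> limitin X x z sequentially \<Longrightarrow> z = y0"
    using DD by blast
  obtain t where t: "\<forall>n m. \<nu> n (m + t n) \<in> D n"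
    using reindex[of X "\<lambda>x. x" \<nu> y0 D] V1 D by blast
  define v where "v n m = \<nu> n (m + t n)" for n m
  have vX': "\<And>n m. v n m \<in> topspace X" by (simp add: v_def vX)
  have vD: "\<And>n m. v n m \<in> D n" using t by (simp add: v_def)
  have V1': "limitin X (v n) y0 sequentially" for n
    unfolding v_def using limitin_sequentially_offset[OF V1[of n], of "t n"] by simp
  define st where "st = (\<lambda>z. F' ((1/2) *\<^sub>R F (fst z) + (1/2) *\<^sub>R F (snd z)))"
  have stc: "continuous_map (prod_topology X X) X st"
  proof -
    have c1: "continuous_map (prod_topology X X) T (\<lambda>z. (1/2) *\<^sub>R F (fst z) + (1/2) *\<^sub>R F (snd z))"
      by (intro lts_add_cont2[OF lts]
          continuous_map_compose[OF continuous_map_compose[OF continuous_map_fst H(5)] lts_scale_cont[OF lts], unfolded o_def]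
          continuous_map_compose[OF continuous_map_compose[OF continuous_map_snd H(5)] lts_scale_cont[OF lts], unfolded o_def])
    have "continuous_map (prod_topology X X) (subtopology T C) (\<lambda>z. (1/2) *\<^sub>R F (fst z) + (1/2) *\<^sub>R F (snd z))"
      using c1 H(1) midC by (auto simp: continuous_map_in_subtopology)
    from continuous_map_compose[OF this H(6)] show ?thesis by (simp add: st_def o_def)
  qed
  have Fst: "F (st (x, y)) = (1/2) *\<^sub>R F x + (1/2) *\<^sub>R F y" "st (x, y) \<in> topspace X"
    if "x \<in> topspace X" "y \<in> topspace X" for x y
  proof -
    have "(1/2) *\<^sub>R F x + (1/2) *\<^sub>R F y \<in> topspace T" "(1/2) *\<^sub>R F x + (1/2) *\<^sub>R F y \<in> C"
      using that H(1) midC TU by auto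
    then show "F (st (x, y)) = (1/2) *\<^sub>R F x + (1/2) *\<^sub>R F y" "st (x, y) \<in> topspace X"
      using H(3,4) by (auto simp: st_def)
  qed
  have alg: "(2::real) *\<^sub>R ((1/2) *\<^sub>R a + (1/2) *\<^sub>R c) + (-1) *\<^sub>R c = a" for a c :: 'v
    by (simp add: algebra_simps)
  have alg2: "(2::real) *\<^sub>R ((1/2) *\<^sub>R a + (1/2) *\<^sub>R c) + (-1) *\<^sub>R a = c" for a c :: 'v
    by (simp add: algebra_simps)
  define b where "b n m = st (\<kappa> n m, v n m)" for n m
  define p where "p = st (k0, y0)"
  show False
  proof (rule core[OF t1 sq, of b p])
    show "\<And>n m. b n m \<in> topspace X" unfolding b_def using Fst kX vX' by blast
    show "p \<in> topspace X" unfolding p_def using Fst k0X y0X by blast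
    show "\<exists>n. eventually (\<lambda>m. b n m \<in> W) sequentially" if "openin X W" "p \<in> W" for W
    proof -
      have "\<exists>n. eventually (\<lambda>m. st (\<kappa> n m, v n m) \<in> W) sequentially"
        by (rule C1gen[OF stc that(1) _ k0X y0X]) (use that(2) K1 V1' in \<open>auto simp: p_def\<close>)
      then show ?thesis unfolding b_def .
    qed
    show "\<not> limitin X (\<lambda>j. b n (mm j)) z Fi" if Fi: "Fi \<noteq> bot" and mm: "filterlim mm at_top Fi" for n and Fi :: "nat filter" and mm z
    proof
      assume L: "limitin X (\<lambda>j. b n (mm j)) z Fi"
      have Lb: "limitin T (\<lambda>j. F (b n (mm j))) (F z) Fi" by (rule hm_sub_lim_fwd[OF hmF L])
      have Lv: "limitin T (\<lambda>j. F (v n (mm j))) (F y0) Fi"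
        by (rule hm_sub_lim_fwd[OF hmF limitin_filterlim_compose[OF V1' mm]])
      have L2: "limitin T (\<lambda>j. (2::real) *\<^sub>R F (b n (mm j)) + (-1) *\<^sub>R F (v n (mm j))) ((2::real) *\<^sub>R F z + (-1) *\<^sub>R F y0) Fi"
        by (rule lts_lim_add[OF lts lts_lim_scale[OF lts Lb] lts_lim_scale[OF lts Lv]])
      have eq: "(2::real) *\<^sub>R F (b n (mm j)) + (-1) *\<^sub>R F (v n (mm j)) = F (\<kappa> n (mm j))" for j
        unfolding b_def using Fst(1)[OF kX vX'] alg by simp
      have Lk: "limitin T (\<lambda>j. F (\<kappa> n (mm j))) ((2::real) *\<^sub>R F z + (-1) *\<^sub>R F y0) Fi" using L2 eq by simp
      have wC: "(2::real) *\<^sub>R F z + (-1) *\<^sub>R F y0 \<in> C"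
        by (rule limitin_closedin[OF Lk Cc _ Fi]) (use H(1)[OF kX] in simp)
      have "limitin X (\<lambda>j. \<kappa> n (mm j)) (F' ((2::real) *\<^sub>R F z + (-1) *\<^sub>R F y0)) Fi"
        by (rule hm_sub_lim[OF hmF kX _ wC Lk]) (simp add: TU)
      then show False using K2[OF Fi mm] by blast
    qed
    show "\<not> limitin X (\<lambda>j. b (nn j) (mm j)) z sequentially" if nn: "filterlim nn at_top sequentially" for nn mm z
    proof
      assume L: "limitin X (\<lambda>j. b (nn j) (mm j)) z sequentially"
      have Lb: "limitin T (\<lambda>j. F (b (nn j) (mm j))) (F z) sequentially" by (rule hm_sub_lim_fwd[OF hmF L])
      have Lk: "limitin T (\<lambda>j. F (\<kappa> (nn j) (mm j))) (F k0) sequentially"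
        by (rule hm_sub_lim_fwd[OF hmF K1_seq[OF K1 k0X nn]])
      have L2: "limitin T (\<lambda>j. (2::real) *\<^sub>R F (b (nn j) (mm j)) + (-1) *\<^sub>R F (\<kappa> (nn j) (mm j))) ((2::real) *\<^sub>R F z + (-1) *\<^sub>R F k0) sequentially"
        by (rule lts_lim_add[OF lts lts_lim_scale[OF lts Lb] lts_lim_scale[OF lts Lk]])
      have eq: "(2::real) *\<^sub>R F (b (nn j) (mm j)) + (-1) *\<^sub>R F (\<kappa> (nn j) (mm j)) = F (v (nn j) (mm j))" for j
        unfolding b_def using Fst(1)[OF kX vX'] alg2 by simp
      have Lv: "limitin T (\<lambda>j. F (v (nn j) (mm j))) ((2::real) *\<^sub>R F z + (-1) *\<^sub>R F k0) sequentially" using L2 eq by simp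
      have wC: "(2::real) *\<^sub>R F z + (-1) *\<^sub>R F k0 \<in> C"
        by (rule limitin_closedin[OF Lv Cc]) (use H(1)[OF vX'] in simp_all)
      have LvX: "limitin X (\<lambda>j. v (nn j) (mm j)) (F' ((2::real) *\<^sub>R F z + (-1) *\<^sub>R F k0)) sequentially"
        by (rule hm_sub_lim[OF hmF vX' _ wC Lv]) (simp add: TU)
      have "F' ((2::real) *\<^sub>R F z + (-1) *\<^sub>R F k0) = y0"
        by (rule Dk[OF nn _ LvX]) (simp add: vD)
      with LvX have "limitin X (\<lambda>j. \<nu> (nn j) (mm j + t (nn j))) y0 sequentially" by (simp add: v_def)
      then show False using V2[OF nn, of "\<lambda>j. mm j + t (nn j)"] by simp
    qed
  qed
qed


theorem theorem2:
  fixes X :: "'a topology" and V' :: "'a set" and h :: "(nat \<times> real) option \<Rightarrow> 'a"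
  assumes pn: "perfectly_normal_space X"
      and seq: "sequential_space X"
      and K: "\<exists>C. closedin X C \<and> subtopology X C homeomorphic_space top_of_set K_set"
      and V'sub: "V' \<subseteq> topspace X"
      and hV: "homeomorphic_map fan_V (subtopology X V') h"
  shows "(\<forall>(T :: 'v::real_vector topology) C. linear_topological_space T \<and> convex C \<and> closedin T C
            \<longrightarrow> \<not> (X homeomorphic_space subtopology T C))
     \<and> (\<forall>(G :: 'g topology) mul e iv M. topological_group G mul e iv \<and> M \<subseteq> topspace G \<and>
            closedin G M \<and> multiplicative_subset mul M
            \<longrightarrow> \<not> (X homeomorphic_space subtopology G M))
     \<and> (\<forall>(G :: 'k topology) mul e iv M f. topological_group G mul e iv \<and> M \<subseteq> topspace G \<and>
            multiplicative_subset mul M \<and> homeomorphic_map X (subtopology G M) f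
            \<longrightarrow> f (h None) \<noteq> e)"
proof -
  obtain Kc where Kc: "closedin X Kc" and Kh: "subtopology X Kc homeomorphic_space top_of_set K_set"
    using K by blast
  obtain g where g: "homeomorphic_map (top_of_set K_set) (subtopology X Kc) g"
    using Kh homeomorphic_space_sym homeomorphic_space by blast
  define \<kappa> where "\<kappa> n m = g (kpt n m)" for n m
  define k0 where "k0 = g (0,0)"
  define \<nu> where "\<nu> n m = h (Some (Suc n, 1 / real (Suc m)))" for n m
  define y0 where "y0 = h None"
  have kX: "\<And>n m. \<kappa> n m \<in> topspace X" unfolding \<kappa>_def using XK0(2)[OF g] by blast
  have k0X: "k0 \<in> topspace X" unfolding k0_def using XK0(1)[OF g] by blast
  have K1: "\<And>U. openin X U \<Longrightarrow> k0 \<in> U \<Longrightarrow> \<exists>N. \<forall>n\<ge>N. \<forall>m. \<kappa> n m \<in> U"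
    unfolding \<kappa>_def k0_def using XK1[OF g] by blast
  have K2: "\<And>n (Fi::nat filter) mm z. Fi \<noteq> bot \<Longrightarrow> filterlim mm at_top Fi \<Longrightarrow> \<not> limitin X (\<lambda>j. \<kappa> n (mm j)) z Fi"
    unfolding \<kappa>_def using XK2[OF Kc g] by blast
  have vX: "\<And>n m. \<nu> n m \<in> topspace X" unfolding \<nu>_def using XV0(2)[OF hV] by blast
  have y0X: "y0 \<in> topspace X" unfolding y0_def using XV0(1)[OF hV] by blast
  have V1: "\<And>n. limitin X (\<nu> n) y0 sequentially"
    unfolding \<nu>_def y0_def using XV1[OF hV] by blast
  have V2: "\<And>nn mm. filterlim nn at_top sequentially \<Longrightarrow> \<not> limitin X (\<lambda>j. \<nu> (nn j) (mm j)) y0 sequentially"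
    unfolding \<nu>_def y0_def using XV2[OF hV] by blast
  note common = pn seq kX k0X K1 K2 vX y0X V1 V2
  have A: "\<not> (X homeomorphic_space subtopology T C)"
    if "linear_topological_space T" "convex C" "closedin T C" for T :: "'v::real_vector topology" and C
  proof
    assume "X homeomorphic_space subtopology T C"
    then obtain F F' where hF: "homeomorphic_maps X (subtopology T C) F F'"
      unfolding homeomorphic_space_def by blast
    show False by (rule partA[of X \<kappa> k0 \<nu> y0 T C F F', OF common that hF])
  qed
  have B: "\<not> (X homeomorphic_space subtopology G M)"
    if "topological_group G mul e iv" "closedin G M" "multiplicative_subset mul M" for G :: "'g topology" and mul e iv M
  proof
    assume "X homeomorphic_space subtopology G M"
    then obtain F F' where hF: "homeomorphic_maps X (subtopology G M) F F'"
      unfolding homeomorphic_space_def by blast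
    show False by (rule partB[of X \<kappa> k0 \<nu> y0 G mul e iv M F F', OF common that hF])
  qed
  have C: "f (h None) \<noteq> e"
    if P: "topological_group G mul e iv" "multiplicative_subset mul M" "homeomorphic_map X (subtopology G M) f"
    for G :: "'k topology" and mul e iv M f
  proof
    assume fe: "f (h None) = e"
    obtain F' where hF: "homeomorphic_maps X (subtopology G M) f F'"
      using P(3) homeomorphic_map_maps by blast
    have fy: "f y0 = e" using fe by (simp add: y0_def)
    show False by (rule partC[of X \<kappa> k0 \<nu> y0 G mul e iv M f F', OF common P(1,2) hF fy])
  qed
  show ?thesis
  proof (intro conjI allI impI)
    fix T :: "'v topology" and CC
    assume "linear_topological_space T \<and> convex CC \<and> closedin T CC"
    then show "\<not> X homeomorphic_space subtopology T CC" using A by blast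
  next
    fix G :: "'g topology" and mul e iv M
    assume "topological_group G mul e iv \<and> M \<subseteq> topspace G \<and> closedin G M \<and> multiplicative_subset mul M"
    then show "\<not> X homeomorphic_space subtopology G M" using B by blast
  next
    fix G :: "'k topology" and mul e iv M f
    assume "topological_group G mul e iv \<and> M \<subseteq> topspace G \<and> multiplicative_subset mul M \<and> homeomorphic_map X (subtopology G M) f"
    then show "f (h None) \<noteq> e" using C[of G mul e iv M f] by blast
  qed
qed

end
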